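(* Let $n\ge1$, $\alpha>0$, and let $\ell(z,w)=e^{\alpha\langle z,w\rangle}$ for $z,w\in\mathbb{C}^n$ be the reproducing kernel of the Bargmann–Fock space $F^2_\alpha=\{f \text{ entire on } \mathbb{C}^n: \int_{\mathbb{C}^n}|f(z)|^2e^{-\alpha|z|^2}\,dm(z)<\infty\}$ ($dm$ Lebesgue measure). Then $\ell$ has the automatic separation property.
   Context: For a kernel $\ell$ with reproducing kernel Hilbert space $\mathcal{H}_\ell$, $\ell_w=\ell(\cdot,w)$, $\hat\ell_w=\ell_w/\|\ell_w\|$ and $d_\ell(z,w)=\sqrt{1-|\langle\hat\ell_z,\hat\ell_w\rangle|^2}$. A sequence is weakly separated by $\ell$ if $d_\ell(\lambda_i,\lambda_j)\ge\epsilon>0$ for all $i\ne j$; for $m\ge2$ it is $m$-weakly separated by $\ell$ if there is $\epsilon>0$ such that for every $m$-point subset $\{\mu_1,\dots,\mu_m\}$ of it, $\mathrm{dist}(\hat\ell_{\mu_1},\mathrm{span}\{\hat\ell_{\mu_2},\dots,\hat\ell_{\mu_m}\})\ge\epsilon$. $\ell$ has the automatic separation property if every sequence weakly separated by $\ell$ is $m$-weakly separated by $\ell$ for every $m\ge3$. *)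

theory Defs
  imports "HOL-Analysis.Analysis"
begin

definition cinner :: "complex ^ 'n \<Rightarrow> complex ^ 'n \<Rightarrow> complex" where
  "cinner z w = (\<Sum>i\<in>UNIV. z $ i * cnj (w $ i))"

definition fock_kernel :: "real \<Rightarrow> complex ^ 'n \<Rightarrow> complex ^ 'n \<Rightarrow> complex" where
  "fock_kernel \<alpha> z w = exp (complex_of_real \<alpha> * cinner z w)"

text \<open>For a (positive definite) kernel K with l_w = K(.,w), the reproducing property gives
  <l_z, l_w> = K w z and ||l_w||^2 = K w w.  Hence the inner product of the normalized
  kernel functions is <hat l_z, hat l_w> = K w z / (||l_z|| ||l_w||).\<close>
definition nk_inner :: "('a \<Rightarrow> 'a \<Rightarrow> complex) \<Rightarrow> 'a \<Rightarrow> 'a \<Rightarrow> complex" where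
  "nk_inner K z w = K w z / complex_of_real (sqrt (Re (K z z)) * sqrt (Re (K w w)))"

definition kdist :: "('a \<Rightarrow> 'a \<Rightarrow> complex) \<Rightarrow> 'a \<Rightarrow> 'a \<Rightarrow> real" where
  "kdist K z w = sqrt (1 - (cmod (nk_inner K z w))\<^sup>2)"

text \<open>Norm in H_K of the finite combination sum_{s in A} a s * hat l_s, computed from
  the reproducing property (sesquilinearity of the inner product).\<close>
definition nk_comb_norm :: "('a \<Rightarrow> 'a \<Rightarrow> complex) \<Rightarrow> 'a set \<Rightarrow> ('a \<Rightarrow> complex) \<Rightarrow> real" where
  "nk_comb_norm K A a =
     sqrt (Re (\<Sum>s\<in>A. \<Sum>t\<in>A. a s * cnj (a t) * nk_inner K s t))"

text \<open>dist(hat l_x, span{hat l_t : t in T}) for finite T with x not in T: the infimum of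
  ||hat l_x - sum_{t in T} c t * hat l_t|| over all coefficient vectors c.\<close>
definition nk_dist_span :: "('a \<Rightarrow> 'a \<Rightarrow> complex) \<Rightarrow> 'a \<Rightarrow> 'a set \<Rightarrow> real" where
  "nk_dist_span K x T =
     (INF c\<in>(UNIV :: ('a \<Rightarrow> complex) set).
        nk_comb_norm K (insert x T) (\<lambda>s. if s = x then 1 else - c s))"

definition weakly_separated :: "('a \<Rightarrow> 'a \<Rightarrow> complex) \<Rightarrow> (nat \<Rightarrow> 'a) \<Rightarrow> bool" where
  "weakly_separated K lam \<longleftrightarrow>
     (\<exists>\<epsilon>>0. \<forall>i j. i \<noteq> j \<longrightarrow> kdist K (lam i) (lam j) \<ge> \<epsilon>)"

definition m_weakly_separated :: "('a \<Rightarrow> 'a \<Rightarrow> complex) \<Rightarrow> nat \<Rightarrow> (nat \<Rightarrow> 'a) \<Rightarrow> bool" where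
  "m_weakly_separated K m lam \<longleftrightarrow>
     (\<exists>\<epsilon>>0. \<forall>S. S \<subseteq> range lam \<and> finite S \<and> card S = m \<longrightarrow>
        (\<forall>\<mu>\<in>S. nk_dist_span K \<mu> (S - {\<mu>}) \<ge> \<epsilon>))"

definition automatic_separation :: "('a \<Rightarrow> 'a \<Rightarrow> complex) \<Rightarrow> bool" where
  "automatic_separation K \<longleftrightarrow>
     (\<forall>lam. weakly_separated K lam \<longrightarrow> (\<forall>m\<ge>3. m_weakly_separated K m lam))"

end

theory Submission
  imports Defs "HOL-Library.FuncSet"
begin

definition nsq :: "complex ^ 'n \<Rightarrow> real" where
  "nsq z = (\<Sum>i\<in>UNIV. (cmod (z $ i))\<^sup>2)"

lemma nsq_nonneg: "nsq z \<ge> 0"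
  unfolding nsq_def by (simp add: sum_nonneg)

lemma mult_cnj_cmod: "z * cnj z = complex_of_real ((cmod z)\<^sup>2)"
  by (simp add: complex_mult_cnj cmod_power2)

lemma cinner_self: "cinner z z = complex_of_real (nsq z)"
  unfolding cinner_def nsq_def by (simp add: mult_cnj_cmod)

lemma cnj_cinner: "cnj (cinner z w) = cinner w z"
  unfolding cinner_def by (simp add: mult.commute)

lemma cinner_zero_right[simp]: "cinner z 0 = 0"
  unfolding cinner_def by simp

lemma cinner_shift:
  "cinner t s = cinner (t - m) (s - m) + cinner t m + cinner m s - cinner m m"
  unfolding cinner_def by (simp add: sum.distrib[symmetric] sum_subtractf[symmetric] algebra_simps)

lemma sqrt_exp: "sqrt (exp x) = exp (x / 2)"
proof -
  have "exp x = (exp (x/2))\<^sup>2" by (simp add: power2_eq_square exp_add[symmetric])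
  thus ?thesis by simp
qed


lemma prod_cinner_tensor:
  fixes A :: "'b set" and w :: "'b \<Rightarrow> complex ^ 'n"
  assumes "finite A"
  shows "(\<Prod>r\<in>A. cinner (w r) y) =
    (\<Sum>f\<in>PiE A (\<lambda>_. UNIV). \<Prod>r\<in>A. w r $ f r * cnj (y $ f r))"
  unfolding cinner_def using assms by (simp add: prod_sum_PiE)

lemma cinner_pow_tensor:
  fixes A :: "'b set"
  assumes "finite A"
  shows "(cinner y z) ^ (card A) =
    (\<Sum>f\<in>PiE A (\<lambda>_. UNIV). \<Prod>r\<in>A. y $ f r * cnj (z $ f r))"
  using prod_cinner_tensor[OF assms, of "\<lambda>_. y" z] by simp

lemma complex_CS:
  fixes W V :: "'a \<Rightarrow> complex"
  shows "(cmod (\<Sum>f\<in>B. W f * V f))\<^sup>2 \<le> (\<Sum>f\<in>B. (cmod (W f))\<^sup>2) * (\<Sum>f\<in>B. (cmod (V f))\<^sup>2)"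
proof -
  have "cmod (\<Sum>f\<in>B. W f * V f) \<le> (\<Sum>f\<in>B. cmod (W f) * cmod (V f))"
    by (metis (no_types, lifting) norm_mult norm_sum sum.cong)
  hence "(cmod (\<Sum>f\<in>B. W f * V f))\<^sup>2 \<le> (\<Sum>f\<in>B. cmod (W f) * cmod (V f))\<^sup>2"
    by (simp add: power_mono)
  also have "\<dots> \<le> (\<Sum>f\<in>B. (cmod (W f))\<^sup>2) * (\<Sum>f\<in>B. (cmod (V f))\<^sup>2)"
    by (rule Cauchy_Schwarz_ineq_sum)
  finally show ?thesis .
qed

lemma P_tensor:
  fixes A :: "'b set" and S :: "'s set" and x :: "'s \<Rightarrow> complex ^ 'n" and c :: "'s \<Rightarrow> complex"
  assumes "finite A"
  shows "(\<Sum>s\<in>S. \<Sum>t\<in>S. c s * cnj (c t) * (cinner (x t) (x s)) ^ card A) =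
    complex_of_real (\<Sum>f\<in>PiE A (\<lambda>_. UNIV).
       (cmod (\<Sum>s\<in>S. c s * (\<Prod>r\<in>A. cnj (x s $ f r))))\<^sup>2)"
proof -
  let ?F = "PiE A (\<lambda>_. UNIV :: 'n set)"
  let ?V = "\<lambda>f. \<Sum>s\<in>S. c s * (\<Prod>r\<in>A. cnj (x s $ f r))"
  have cV: "cnj (?V f) = (\<Sum>t\<in>S. cnj (c t) * (\<Prod>r\<in>A. x t $ f r))" for f
    by (simp add: cnj_sum cnj_prod)
  have "complex_of_real (\<Sum>f\<in>?F. (cmod (?V f))\<^sup>2) = (\<Sum>f\<in>?F. ?V f * cnj (?V f))"
    by (simp only: of_real_sum mult_cnj_cmod)
  also have "\<dots> = (\<Sum>f\<in>?F. \<Sum>s\<in>S. \<Sum>t\<in>S. c s * cnj (c t) * ((\<Prod>r\<in>A. x t $ f r) * (\<Prod>r\<in>A. cnj (x s $ f r))))"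
    unfolding cV by (simp add: sum_product algebra_simps)
  also have "\<dots> = (\<Sum>s\<in>S. \<Sum>t\<in>S. \<Sum>f\<in>?F. c s * cnj (c t) * ((\<Prod>r\<in>A. x t $ f r) * (\<Prod>r\<in>A. cnj (x s $ f r))))"
    by (simp add: sum.swap[of _ ?F] sum.swap[of _ ?F S])
  also have "\<dots> = (\<Sum>s\<in>S. \<Sum>t\<in>S. c s * cnj (c t) * (cinner (x t) (x s)) ^ card A)"
    unfolding cinner_pow_tensor[OF assms] by (simp add: sum_distrib_left prod.distrib)
  finally show ?thesis by simp
qed


lemma P_nonneg:
  "Re (\<Sum>s\<in>S. \<Sum>t\<in>S. c s * cnj (c t) * (cinner (x t) (x s)) ^ k) \<ge> 0"
proof -
  have "(\<Sum>s\<in>S. \<Sum>t\<in>S. c s * cnj (c t) * (cinner (x t) (x s)) ^ k) =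
    (\<Sum>s\<in>S. \<Sum>t\<in>S. c s * cnj (c t) * (cinner (x t) (x s)) ^ card {..<k})" by simp
  also have "\<dots> = complex_of_real (\<Sum>f\<in>PiE {..<k} (\<lambda>_. UNIV).
       (cmod (\<Sum>s\<in>S. c s * (\<Prod>r\<in>{..<k}. cnj (x s $ f r))))\<^sup>2)"
    by (rule P_tensor) simp
  finally show ?thesis by (simp add: sum_nonneg)
qed

lemma Q_sums:
  fixes \<alpha> :: real
  shows "(\<lambda>k. complex_of_real (\<alpha>^k / fact k) *
      (\<Sum>s\<in>S. \<Sum>t\<in>S. c s * cnj (c t) * (cinner (x t) (x s)) ^ k)) sums
    (\<Sum>s\<in>S. \<Sum>t\<in>S. c s * cnj (c t) * exp (complex_of_real \<alpha> * cinner (x t) (x s)))"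
proof -
  have e: "(\<lambda>k. c s * cnj (c t) * (complex_of_real (\<alpha>^k / fact k) * (cinner (x t) (x s)) ^ k))
      sums (c s * cnj (c t) * exp (complex_of_real \<alpha> * cinner (x t) (x s)))" for s t
  proof -
    have "(\<lambda>n. (complex_of_real \<alpha> * cinner (x t) (x s))^n /\<^sub>R fact n) sums exp (complex_of_real \<alpha> * cinner (x t) (x s))"
      by (rule exp_converges)
    moreover have "(complex_of_real \<alpha> * cinner (x t) (x s))^n /\<^sub>R fact n =
        complex_of_real (\<alpha>^n / fact n) * (cinner (x t) (x s)) ^ n" for n
      by (simp add: scaleR_conv_of_real power_mult_distrib field_simps)
    ultimately have s1: "(\<lambda>n. complex_of_real (\<alpha>^n / fact n) * (cinner (x t) (x s)) ^ n) sums exp (complex_of_real \<alpha> * cinner (x t) (x s))"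
      by (simp only:)
    from sums_mult[OF s1, of "c s * cnj (c t)"] show ?thesis .
  qed
  have "(\<lambda>k. \<Sum>s\<in>S. \<Sum>t\<in>S. c s * cnj (c t) * (complex_of_real (\<alpha>^k / fact k) * (cinner (x t) (x s)) ^ k))
     sums (\<Sum>s\<in>S. \<Sum>t\<in>S. c s * cnj (c t) * exp (complex_of_real \<alpha> * cinner (x t) (x s)))"
    by (intro sums_sum e)
  thus ?thesis by (simp add: sum_distrib_left algebra_simps)
qed

lemma Q_ge:
  fixes \<alpha> :: real
  assumes "\<alpha> > 0" "finite S"
  shows "\<alpha>^k / fact k * Re (\<Sum>s\<in>S. \<Sum>t\<in>S. c s * cnj (c t) * (cinner (x t) (x s)) ^ k) \<le>
     Re (\<Sum>s\<in>S. \<Sum>t\<in>S. c s * cnj (c t) * exp (complex_of_real \<alpha> * cinner (x t) (x s)))"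
proof -
  let ?g = "\<lambda>k. \<alpha>^k / fact k * Re (\<Sum>s\<in>S. \<Sum>t\<in>S. c s * cnj (c t) * (cinner (x t) (x s)) ^ k)"
  have "?g sums Re (\<Sum>s\<in>S. \<Sum>t\<in>S. c s * cnj (c t) * exp (complex_of_real \<alpha> * cinner (x t) (x s)))"
  proof -
    have "Re (complex_of_real r * z) = r * Re z" for r z by simp
    hence "(\<lambda>k. Re (complex_of_real (\<alpha>^k / fact k) *
      (\<Sum>s\<in>S. \<Sum>t\<in>S. c s * cnj (c t) * (cinner (x t) (x s)) ^ k))) = ?g"
      by (intro ext) (simp only:)
    with sums_Re[OF Q_sums[of \<alpha> c x S]] show ?thesis by (simp only:)
  qed
  moreover have "?g j \<ge> 0" for j
    using assms P_nonneg[of c x j S] by simp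
  ultimately show ?thesis
    using sum_le_suminf[of ?g "{k}"] by (simp add: sums_iff)
qed


lemma LA_bound:
  fixes A :: "'b set" and w :: "'b \<Rightarrow> complex ^ 'n" and S :: "'s set" and x :: "'s \<Rightarrow> complex ^ 'n"
  assumes "finite A"
  shows "(cmod (\<Sum>s\<in>S. c s * (\<Prod>r\<in>A. cinner (w r) (x s))))\<^sup>2 \<le>
     (\<Prod>r\<in>A. nsq (w r)) * Re (\<Sum>s\<in>S. \<Sum>t\<in>S. c s * cnj (c t) * (cinner (x t) (x s)) ^ card A)"
proof -
  let ?F = "PiE A (\<lambda>_. UNIV :: 'n set)"
  let ?V = "\<lambda>f. \<Sum>s\<in>S. c s * (\<Prod>r\<in>A. cnj (x s $ f r))"
  let ?W = "\<lambda>f. \<Prod>r\<in>A. w r $ f r"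
  have "(\<Sum>s\<in>S. c s * (\<Prod>r\<in>A. cinner (w r) (x s))) =
      (\<Sum>s\<in>S. \<Sum>f\<in>?F. c s * (?W f * (\<Prod>r\<in>A. cnj (x s $ f r))))"
    unfolding prod_cinner_tensor[OF assms] by (simp add: sum_distrib_left prod.distrib)
  also have "\<dots> = (\<Sum>f\<in>?F. ?W f * ?V f)"
    by (subst sum.swap) (simp add: sum_distrib_left algebra_simps)
  finally have eq: "(\<Sum>s\<in>S. c s * (\<Prod>r\<in>A. cinner (w r) (x s))) = (\<Sum>f\<in>?F. ?W f * ?V f)" .
  have W: "(\<Sum>f\<in>?F. (cmod (?W f))\<^sup>2) = (\<Prod>r\<in>A. nsq (w r))"
    unfolding nsq_def using assms by (simp add: prod_sum_PiE prod_norm[symmetric] prod_power_distrib)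
  have V: "(\<Sum>f\<in>?F. (cmod (?V f))\<^sup>2) =
      Re (\<Sum>s\<in>S. \<Sum>t\<in>S. c s * cnj (c t) * (cinner (x t) (x s)) ^ card A)"
    unfolding P_tensor[OF assms] by simp
  show ?thesis
    using complex_CS[of ?W ?V ?F] unfolding eq W V .
qed


lemma core:
  fixes S :: "'s set" and x :: "'s \<Rightarrow> complex ^ 'n" and c :: "'s \<Rightarrow> complex"
    and d \<alpha> :: real and m :: nat
  assumes fin: "finite S" and mu: "\<mu> \<in> S" and x0: "x \<mu> = 0" and c1: "c \<mu> = 1"
    and sep: "\<And>t. t \<in> S - {\<mu>} \<Longrightarrow> nsq (x t) \<ge> d" and dpos: "d > 0" and apos: "\<alpha> > 0"
    and card: "card S \<le> m"
  shows "1 / (4^m * (fact m * (max 1 (1/(d*\<alpha>)))^m)) \<le>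
     Re (\<Sum>s\<in>S. \<Sum>t\<in>S. c s * cnj (c t) * exp (complex_of_real \<alpha> * cinner (x t) (x s)))"
proof -
  define q where "q = Re (\<Sum>s\<in>S. \<Sum>t\<in>S. c s * cnj (c t) * exp (complex_of_real \<alpha> * cinner (x t) (x s)))"
  define R where "R = max 1 (1/(d*\<alpha>))"
  define B where "B = fact m * R^m"
  define T where "T = S - {\<mu>}"
  define w where "w t = (\<chi> i. - x t $ i / complex_of_real (nsq (x t)))" for t
  let ?P = "\<lambda>k. Re (\<Sum>s\<in>S. \<Sum>t\<in>S. c s * cnj (c t) * (cinner (x t) (x s)) ^ k)"
  have finT: "finite T" using fin T_def by simp
  have cardT: "card T \<le> m" using card fin mu T_def by (simp add: card_Diff_singleton) 
  have npos: "nsq (x t) > 0" if "t \<in> T" for t using sep[of t] that dpos T_def by force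
  have cw: "cinner (w t) y = - cinner (x t) y / complex_of_real (nsq (x t))" for t y
    unfolding cinner_def w_def by (simp add: sum_divide_distrib sum_negf)
  have nw: "nsq (w t) \<le> 1 / d" if "t \<in> T" for t
  proof -
    have "nsq (w t) = (\<Sum>i\<in>UNIV. (cmod (x t $ i))\<^sup>2 / (nsq (x t))\<^sup>2)"
      unfolding nsq_def[of "w t"] unfolding w_def using nsq_nonneg[of "x t"] by (simp add: norm_divide power_divide)
    also have "\<dots> = nsq (x t) / (nsq (x t))\<^sup>2"
      by (simp only: sum_divide_distrib[symmetric] nsq_def[of "x t", symmetric])
    also have "\<dots> = 1 / nsq (x t)" using npos[OF that]
      by (simp add: power2_eq_square)
    also have "\<dots> \<le> 1 / d" using sep[of t] that T_def dpos by (simp add: frac_le)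
    finally show ?thesis .
  qed
  define cp where "cp y = (\<Prod>t\<in>T. cinner (w t) y + 1)" for y
  have cp0: "cp (x s) = 0" if "s \<in> T" for s
  proof -
    have "cinner (w s) (x s) + 1 = 0"
      using npos[OF that] by (simp add: cw cinner_self)
    thus ?thesis unfolding cp_def using finT that by (simp add: prod_zero_iff) blast
  qed
  have cpmu: "cp (x \<mu>) = 1" unfolding cp_def x0 by simp
  have S_eq: "S = insert \<mu> T" using mu T_def by auto
  have "(\<Sum>s\<in>S. c s * cp (x s)) = c \<mu> * cp (x \<mu>) + (\<Sum>s\<in>T. c s * cp (x s))"
    unfolding S_eq by (rule sum.insert[OF finT]) (simp add: T_def)
  also have "\<dots> = 1" using cp0 cpmu c1 by simp
  finally have one: "(\<Sum>s\<in>S. c s * cp (x s)) = 1" .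
  have cpexp: "cp y = (\<Sum>A\<in>Pow T. \<Prod>r\<in>A. cinner (w r) y)" for y
    unfolding cp_def using prod_add[OF finT, of "\<lambda>t. cinner (w t) y" "\<lambda>_. 1"] by simp
  define L where "L A = (\<Sum>s\<in>S. c s * (\<Prod>r\<in>A. cinner (w r) (x s)))" for A
  have "(\<Sum>s\<in>S. c s * cp (x s)) = (\<Sum>A\<in>Pow T. L A)"
    unfolding cpexp L_def by (subst sum.swap) (simp add: sum_distrib_left)
  with one have sumL: "(\<Sum>A\<in>Pow T. L A) = 1" by simp
  have qnn: "q \<ge> 0" using Q_ge[OF apos fin, of 0 c x] P_nonneg[of c x 0 S] q_def by simp
  have R1: "R \<ge> 1" unfolding R_def by simp
  have Bpos: "B > 0" unfolding B_def using R1 by simp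
  have Lb: "cmod (L A) \<le> sqrt (B * q)" if A: "A \<in> Pow T" for A
  proof -
    define k where "k = card A"
    have finA: "finite A" using A finT finite_subset by auto
    have kle: "k \<le> m" using A cardT finT k_def by (meson PowD card_mono le_trans)
    have "(cmod (L A))\<^sup>2 \<le> (\<Prod>r\<in>A. nsq (w r)) * ?P k"
      unfolding L_def k_def by (rule LA_bound[OF finA])
    also have "\<dots> \<le> (1/d)^k * ?P k"
    proof (rule mult_right_mono)
      have "(\<Prod>r\<in>A. nsq (w r)) \<le> (\<Prod>r\<in>A. 1/d)"
        by (rule prod_mono) (use A nw nsq_nonneg in auto)
      thus "(\<Prod>r\<in>A. nsq (w r)) \<le> (1/d)^k" by (simp add: k_def)
    qed (rule P_nonneg)
    also have "\<dots> \<le> (1/d)^k * (fact k / \<alpha>^k * q)"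
    proof (rule mult_left_mono)
      have "\<alpha>^k / fact k * ?P k \<le> q" unfolding q_def by (rule Q_ge[OF apos fin])
      hence "?P k \<le> q / (\<alpha>^k / fact k)" using apos by (simp add: field_simps)
      thus "?P k \<le> fact k / \<alpha>^k * q" by (simp add: field_simps)
    qed (use dpos in simp)
    also have "\<dots> = fact k * (1/(d*\<alpha>))^k * q" by (simp add: field_simps power_mult_distrib)
    also have "\<dots> \<le> B * q"
    proof (rule mult_right_mono[OF _ qnn])
      have "(1/(d*\<alpha>))^k \<le> R^k" using dpos apos by (intro power_mono) (auto simp: R_def)
      also have "\<dots> \<le> R^m" using R1 kle by (simp add: power_increasing)
      finally have "(1/(d*\<alpha>))^k \<le> R^m" .
      moreover have "fact k \<le> (fact m :: real)" using kle by (simp add: fact_mono)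
      ultimately show "fact k * (1/(d*\<alpha>))^k \<le> B" unfolding B_def
        using dpos apos by (intro mult_mono) auto
    qed
    finally show ?thesis by (simp add: real_le_rsqrt)
  qed
  have "1 = cmod (\<Sum>A\<in>Pow T. L A)" using sumL by simp
  also have "\<dots> \<le> (\<Sum>A\<in>Pow T. cmod (L A))" by (rule norm_sum)
  also have "\<dots> \<le> (\<Sum>A\<in>Pow T. sqrt (B * q))" by (rule sum_mono) (rule Lb)
  also have "\<dots> = 2 ^ card T * sqrt (B * q)" using finT by (simp add: card_Pow)
  also have "\<dots> \<le> 2 ^ m * sqrt (B * q)" using cardT Bpos qnn by (intro mult_right_mono) (auto simp: power_increasing)
  finally have "1 \<le> 2 ^ m * sqrt (B * q)" .
  hence "1 \<le> (2 ^ m * sqrt (B * q))\<^sup>2" by (smt (verit) one_le_power)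
  also have "\<dots> = 4 ^ m * (B * q)"
  proof -
    have "(4::real) ^ m = (2 ^ m)\<^sup>2" by (metis power_mult_distrib power2_eq_square num_double numeral_times_numeral mult_2 mult_2_right power_even_eq power_mult mult.commute)
    thus ?thesis using qnn R1 Bpos by (simp add: power_mult_distrib)
  qed
  finally have "1 \<le> 4 ^ m * B * q" by simp
  moreover have "B > 0" unfolding B_def using R1 by simp
  ultimately have "1 / (4^m * B) \<le> q" by (simp add: field_simps)
  thus ?thesis unfolding q_def B_def R_def .
qed


lemma nk_inner_fock:
  "nk_inner (fock_kernel \<alpha>) s t =
     exp (complex_of_real \<alpha> * cinner t s - complex_of_real (\<alpha> * nsq s / 2 + \<alpha> * nsq t / 2))"
proof -
  have Kd: "Re (fock_kernel \<alpha> z z) = exp (\<alpha> * nsq z)" for z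
    unfolding fock_kernel_def cinner_self
    by (simp only: of_real_mult[symmetric] exp_of_real Re_complex_of_real)
  have "complex_of_real (sqrt (Re (fock_kernel \<alpha> s s)) * sqrt (Re (fock_kernel \<alpha> t t))) =
      exp (complex_of_real (\<alpha> * nsq s / 2 + \<alpha> * nsq t / 2))"
    unfolding Kd sqrt_exp exp_add[symmetric] exp_of_real[symmetric] by (simp only:)
  thus ?thesis unfolding nk_inner_def fock_kernel_def by (simp add: exp_diff)
qed

lemma nk_inner_shift:
  "nk_inner (fock_kernel \<alpha>) s t =
     (exp (complex_of_real \<alpha> * cinner m s - complex_of_real (\<alpha> * nsq m / 2 + \<alpha> * nsq s / 2))) *
     cnj (exp (complex_of_real \<alpha> * cinner m t - complex_of_real (\<alpha> * nsq m / 2 + \<alpha> * nsq t / 2))) *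
     exp (complex_of_real \<alpha> * cinner (t - m) (s - m))"
proof -
  have c: "cnj (exp (complex_of_real \<alpha> * cinner m t - complex_of_real (\<alpha> * nsq m / 2 + \<alpha> * nsq t / 2))) =
     exp (complex_of_real \<alpha> * cinner t m - complex_of_real (\<alpha> * nsq m / 2 + \<alpha> * nsq t / 2))"
    by (simp add: exp_cnj cnj_cinner)
  have e: "complex_of_real \<alpha> * cinner t s - complex_of_real (\<alpha> * nsq s / 2 + \<alpha> * nsq t / 2) =
     (complex_of_real \<alpha> * cinner m s - complex_of_real (\<alpha> * nsq m / 2 + \<alpha> * nsq s / 2)) +
     (complex_of_real \<alpha> * cinner t m - complex_of_real (\<alpha> * nsq m / 2 + \<alpha> * nsq t / 2)) +
     complex_of_real \<alpha> * cinner (t - m) (s - m)"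
    unfolding cinner_shift[of t s m] cinner_self[of m] by (simp add: algebra_simps)
  show ?thesis unfolding nk_inner_fock c e by (simp only: exp_add)
qed

lemma nsq_diff: "nsq (s - t) = nsq s + nsq t - 2 * Re (cinner t s)"
proof -
  have "complex_of_real (nsq (s - t)) = cinner s s - cinner s t - cinner t s + cinner t t"
    unfolding cinner_self[symmetric] cinner_def
    by (simp add: sum.distrib[symmetric] sum_subtractf[symmetric] algebra_simps)
  also have "cinner s t = cnj (cinner t s)" by (simp add: cnj_cinner)
  finally have "complex_of_real (nsq (s - t)) = cinner s s - cnj (cinner t s) - cinner t s + cinner t t" .
  hence "nsq (s - t) = Re (cinner s s - cnj (cinner t s) - cinner t s + cinner t t)"
    by (metis Re_complex_of_real)
  thus ?thesis by (simp add: cinner_self)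
qed

lemma cmod_nk_inner: "(cmod (nk_inner (fock_kernel \<alpha>) s t))\<^sup>2 = exp (- \<alpha> * nsq (s - t))"
proof -
  have "cmod (nk_inner (fock_kernel \<alpha>) s t) = exp (\<alpha> * Re (cinner t s) - (\<alpha> * nsq s / 2 + \<alpha> * nsq t / 2))"
    unfolding nk_inner_fock by simp
  hence "(cmod (nk_inner (fock_kernel \<alpha>) s t))\<^sup>2 = exp (2 * (\<alpha> * Re (cinner t s) - (\<alpha> * nsq s / 2 + \<alpha> * nsq t / 2)))"
    by (simp add: power2_eq_square exp_add[symmetric])
  also have "\<dots> = exp (- \<alpha> * nsq (s - t))" unfolding nsq_diff by (simp add: algebra_simps)
  finally show ?thesis .
qed


theorem mainTheorem17:
  fixes \<alpha> :: real
  assumes "\<alpha> > 0"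
  shows "automatic_separation (fock_kernel \<alpha> :: complex ^ 'n \<Rightarrow> complex ^ 'n \<Rightarrow> complex)"
  unfolding automatic_separation_def
proof (intro allI impI)
  let ?K = "fock_kernel \<alpha> :: complex ^ 'n \<Rightarrow> complex ^ 'n \<Rightarrow> complex"
  fix lam :: "nat \<Rightarrow> complex ^ 'n" and m :: nat
  assume ws: "weakly_separated ?K lam" and m3: "3 \<le> m"
  have apos: "\<alpha> > 0" by fact
  from ws obtain \<epsilon>0 where e0: "\<epsilon>0 > 0"
    and sepk: "\<And>i j. i \<noteq> j \<Longrightarrow> kdist ?K (lam i) (lam j) \<ge> \<epsilon>0"
    unfolding weakly_separated_def by blast
  have exp_le: "exp (- \<alpha> * nsq (lam i - lam j)) \<le> 1 - \<epsilon>0\<^sup>2" if "i \<noteq> j" for i j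
  proof -
    define y where "y = 1 - exp (- \<alpha> * nsq (lam i - lam j))"
    have "\<epsilon>0 \<le> sqrt y" using sepk[OF that] unfolding kdist_def cmod_nk_inner y_def .
    hence "sqrt y > 0" using e0 by linarith
    hence "y > 0" by simp
    have "\<epsilon>0\<^sup>2 \<le> (sqrt y)\<^sup>2" using \<open>\<epsilon>0 \<le> sqrt y\<close> e0 by (intro power_mono) auto
    also have "\<dots> = y" using \<open>y > 0\<close> by simp
    finally show ?thesis unfolding y_def by simp
  qed
  define \<rho> where "\<rho> = 1 - \<epsilon>0\<^sup>2"
  have rpos: "\<rho> > 0" using exp_le[of 0 1] exp_gt_zero[of "- \<alpha> * nsq (lam 0 - lam 1)"] unfolding \<rho>_def by linarith
  have rlt: "\<rho> < 1" using e0 unfolding \<rho>_def by simp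
  define d where "d = - ln \<rho> / \<alpha>"
  have dpos: "d > 0" unfolding d_def using rpos rlt apos ln_less_zero[of \<rho>] by (simp add: divide_neg_pos)
  have sepd: "nsq (lam i - lam j) \<ge> d" if "i \<noteq> j" for i j
  proof -
    have "- \<alpha> * nsq (lam i - lam j) \<le> ln \<rho>"
      using exp_le[OF that] rpos unfolding \<rho>_def[symmetric] by (metis ln_exp ln_mono exp_gt_zero)
    thus ?thesis unfolding d_def using apos by (simp add: field_simps)
  qed
  define B where "B = 1 / (4^m * (fact m * (max 1 (1/(d*\<alpha>)))^m))"
  have Bpos: "B > 0" unfolding B_def by simp
  show "m_weakly_separated ?K m lam"
    unfolding m_weakly_separated_def
  proof (intro exI[of _ "sqrt B"] conjI allI impI ballI)
    show "sqrt B > 0" using Bpos by simp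
    fix S \<mu> assume SH: "S \<subseteq> range lam \<and> finite S \<and> card S = m" and mu: "\<mu> \<in> S"
    have fin: "finite S" using SH by simp
    have ins: "insert \<mu> (S - {\<mu>}) = S" using mu by auto
    show "sqrt B \<le> nk_dist_span ?K \<mu> (S - {\<mu>})"
      unfolding nk_dist_span_def ins
    proof (rule cINF_greatest)
      show "(UNIV :: (complex ^ 'n \<Rightarrow> complex) set) \<noteq> {}" by simp
      fix cc :: "complex ^ 'n \<Rightarrow> complex"
      define a where "a s = (if s = \<mu> then 1 else - cc s)" for s
      define v where "v s = exp (complex_of_real \<alpha> * cinner \<mu> s - complex_of_real (\<alpha> * nsq \<mu> / 2 + \<alpha> * nsq s / 2))" for s
      define x where "x s = s - \<mu>" for s :: "complex ^ 'n"
      define c where "c s = a s * v s" for s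
      have sum_eq: "(\<Sum>s\<in>S. \<Sum>t\<in>S. a s * cnj (a t) * nk_inner ?K s t) =
          (\<Sum>s\<in>S. \<Sum>t\<in>S. c s * cnj (c t) * exp (complex_of_real \<alpha> * cinner (x t) (x s)))"
        unfolding c_def x_def v_def nk_inner_shift[of \<alpha> _ _ \<mu>] by (simp add: algebra_simps)
      have "v \<mu> = 1" unfolding v_def cinner_self by simp
      hence c1: "c \<mu> = 1" unfolding c_def a_def by simp
      have x0: "x \<mu> = 0" unfolding x_def by simp
      have sep: "nsq (x t) \<ge> d" if "t \<in> S - {\<mu>}" for t
      proof -
        have "t \<in> range lam" using that SH by blast
        then obtain i where i: "t = lam i" by blast
        obtain j where j: "\<mu> = lam j" using mu SH by auto
        have "i \<noteq> j" using that i j by auto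
        thus ?thesis using sepd[of i j] i j unfolding x_def by simp
      qed
      have "B \<le> Re (\<Sum>s\<in>S. \<Sum>t\<in>S. c s * cnj (c t) * exp (complex_of_real \<alpha> * cinner (x t) (x s)))"
        unfolding B_def using SH by (intro core[where S=S and \<mu>=\<mu> and x=x and c=c and d=d and \<alpha>=\<alpha>, OF fin mu x0 c1 sep dpos apos]) auto
      hence "sqrt B \<le> sqrt (Re (\<Sum>s\<in>S. \<Sum>t\<in>S. a s * cnj (a t) * nk_inner ?K s t))"
        unfolding sum_eq by simp
      thus "sqrt B \<le> nk_comb_norm ?K S (\<lambda>s. if s = \<mu> then 1 else - cc s)"
        unfolding nk_comb_norm_def a_def .
    qed
  qed
qed

end
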